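(* Let $C\subseteq H$ be nonempty, closed and convex and take $B=N_C$ in Algorithm 3.1 (so $y_n=P_C(w_n-\lambda_nAw_n)$). (i) If Assumption 3.1 holds, then for every $p\in S$ and every $n$, $$\|y_n-\lambda_n(Ay_n-Aw_n)-p\|^2\le\|w_n-p\|^2-\Big(1-\frac{(\mu+\mu_n)^2\lambda_n^2}{\lambda_{n+1}^2}\Big)\|w_n-y_n\|^2 .$$ (ii) If Assumption 3.1 holds and $A$ is $r$-strongly pseudomonotone for some $r>0$, then for every $p\in S$ and every $n$, $$\|y_n-\lambda_n(Ay_n-Aw_n)-p\|^2\le\|w_n-p\|^2-\Big(1-\frac{(\mu+\mu_n)^2\lambda_n^2}{\lambda_{n+1}^2}\Big)\|w_n-y_n\|^2-2r\lambda_n\|y_n-p\|^2 .$$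
   Context: Let $H$ be a real Hilbert space, $A:H\to H$ a single-valued mapping and $B:H\to 2^H$ a set-valued mapping, and let $\Omega:=(A+B)^{-1}(0)=\{x\in H:\ 0\in Ax+Bx\}$. Algorithm 3.1 is the following iteration. Fix $x_0,x_1\in H$, $\mu\in(0,1)$, $\lambda_1>0$, real sequences $\{\alpha_n\},\{\beta_n\},\{\theta_n\}$ and nonnegative real sequences $\{\mu_n\},\{p_n\}$. For $n=1,2,\dots$ compute $w_n=x_n+\alpha_n(x_n-x_{n-1})$, $z_n=x_n+\beta_n(x_n-x_{n-1})$, $y_n=(I+\lambda_nB)^{-1}(I-\lambda_nA)w_n$, and set $\lambda_{n+1}=\min\{(\mu_n+\mu)\|w_n-y_n\|/\|Aw_n-Ay_n\|,\ \lambda_n+p_n\}$ if $Aw_n\neq Ay_n$, and $\lambda_{n+1}=\lambda_n+p_n$ otherwise. If $w_n=y_n$ the algorithm stops (then $y_n\in\Omega$). Otherwise set $x_{n+1}=(1-\theta_n)z_n+\theta_n\big(y_n-\lambda_n(Ay_n-Aw_n)\big)$ and continue. Here $I$ is the identity and $(I+\lambda B)^{-1}$ is the resolvent of $B$. Throughout, it is assumed that the algorithm does not stop, so that infinite sequences $\{x_n\},\{w_n\},\{z_n\},\{y_n\},\{\lambda_n\}$ are generated. $N_C(x)=\{z\in H:\langle z,y-x\rangle\le0\ \forall y\in C\}$ for $x\in C$ and $N_C(x)=\emptyset$ otherwise is the normal cone; $P_C$ is the metric projection onto $C$, and $(I+\lambda N_C)^{-1}=P_C$. $S$ denotes the solution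 set of the variational inequality VI$(A,C)$: find $x^*\in C$ with $\langle Ax^*,y-x^*\rangle\ge0$ for all $y\in C$. Assumption 3.1: (i) $S\neq\emptyset$; (ii) $A$ is pseudomonotone (i.e. $\langle Ax,y-x\rangle\ge0$ implies $\langle Ay,y-x\rangle\ge0$) and Lipschitz continuous on $H$, and whenever $x_n\rightharpoonup w^*$ weakly in $H$, one has $\|Aw^*\|\le\liminf_{n\to\infty}\|Ax_n\|$. $A$ is $r$-strongly pseudomonotone if $\langle Ay,x-y\rangle\ge0$ implies $\langle Ax,x-y\rangle\ge r\|x-y\|^2$ for all $x,y\in H$. *)

theory Defs
  imports "HOL-Analysis.Analysis"
begin

text \<open>Metric projection onto a set C in a real inner product space (the library's
  closest_point is restricted to heine_borel spaces, so we restate it generally).\<close>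
definition metric_proj :: "'a::real_inner set \<Rightarrow> 'a \<Rightarrow> 'a" where
  "metric_proj C x = (SOME y. y \<in> C \<and> (\<forall>z\<in>C. dist x y \<le> dist x z))"

definition weakly_converges :: "(nat \<Rightarrow> 'a::real_inner) \<Rightarrow> 'a \<Rightarrow> bool" where
  "weakly_converges xs x \<longleftrightarrow> (\<forall>z. (\<lambda>n. xs n \<bullet> z) \<longlonglongrightarrow> x \<bullet> z)"

definition pseudomonotone :: "('a::real_inner \<Rightarrow> 'a) \<Rightarrow> bool" where
  "pseudomonotone A \<longleftrightarrow> (\<forall>x y. A x \<bullet> (y - x) \<ge> 0 \<longrightarrow> A y \<bullet> (y - x) \<ge> 0)"

definition strongly_pseudomonotone :: "real \<Rightarrow> ('a::real_inner \<Rightarrow> 'a) \<Rightarrow> bool" where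
  "strongly_pseudomonotone r A \<longleftrightarrow>
     (\<forall>x y. A y \<bullet> (x - y) \<ge> 0 \<longrightarrow> A x \<bullet> (x - y) \<ge> r * (norm (x - y))\<^sup>2)"

definition VI_sol :: "('a::real_inner \<Rightarrow> 'a) \<Rightarrow> 'a set \<Rightarrow> 'a set" where
  "VI_sol A C = {x \<in> C. \<forall>y\<in>C. A x \<bullet> (y - x) \<ge> 0}"

end

theory Submission
  imports Defs
begin


lemma parallelogram_aux:
  fixes u v :: "'a::real_inner"
  shows "(norm (v - u))\<^sup>2 + (norm (u + v))\<^sup>2 = 2 * (norm u)\<^sup>2 + 2 * (norm v)\<^sup>2"
  by (simp add: power2_norm_eq_inner inner_add_left inner_add_right inner_diff_left inner_diff_right inner_commute)

lemma proj_exists: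
  fixes a :: "'a::{real_inner,complete_space}"
  assumes C: "C \<noteq> {}" "closed C" "convex C"
  shows "\<exists>y. y \<in> C \<and> (\<forall>z\<in>C. dist a y \<le> dist a z)"
proof -
  define d where "d = infdist a C"
  have d0: "d \<ge> 0" unfolding d_def by (rule infdist_nonneg)
  have dle: "\<And>z. z \<in> C \<Longrightarrow> d \<le> dist a z" unfolding d_def by (rule infdist_le)
  have "\<forall>k. \<exists>c. c \<in> C \<and> dist a c < d + 1 / real (Suc k)"
  proof
    fix k
    have "infdist a C < d + 1 / real (Suc k)" unfolding d_def by simp
    then show "\<exists>c. c \<in> C \<and> dist a c < d + 1 / real (Suc k)"
      using cINF_less_iff[OF C(1) bdd_below_image_dist[of a C]] infdist_notempty[OF C(1), of a] by auto
  qed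
  then obtain c where c: "\<And>k. c k \<in> C" "\<And>k. dist a (c k) < d + 1 / real (Suc k)"
    by metis
  have key: "(norm (c k - c m))\<^sup>2 \<le> (4 * d + 2) * (1 / real (Suc k) + 1 / real (Suc m))" for k m
  proof -
    define ek where "ek = 1 / real (Suc k)"
    define em where "em = 1 / real (Suc m)"
    have ek: "0 < ek" "ek \<le> 1" unfolding ek_def by auto
    have em: "0 < em" "em \<le> 1" unfolding em_def by auto
    define u where "u = a - c k"
    define v where "v = a - c m"
    have mid: "(1/2) *\<^sub>R c k + (1/2) *\<^sub>R c m \<in> C"
      using C(3) c(1) by (simp add: convex_def)
    have "d \<le> dist a ((1/2) *\<^sub>R c k + (1/2) *\<^sub>R c m)" using dle[OF mid] .
    also have "dist a ((1/2) *\<^sub>R c k + (1/2) *\<^sub>R c m) = norm (u + v) / 2"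
    proof -
      have "a - ((1/2) *\<^sub>R c k + (1/2) *\<^sub>R c m) = (1/2) *\<^sub>R (u + v)"
        unfolding u_def v_def by (simp add: algebra_simps) (simp add: scaleR_left_distrib[symmetric])
      then show ?thesis by (simp add: dist_norm)
    qed
    finally have h1: "2 * d \<le> norm (u + v)" by simp
    have h1': "(2*d)\<^sup>2 \<le> (norm (u + v))\<^sup>2" using h1 d0 by (intro power_mono) auto
    have nu: "norm u < d + ek" using c(2)[of k] unfolding u_def ek_def by (simp add: dist_norm)
    have nv: "norm v < d + em" using c(2)[of m] unfolding v_def ek_def em_def by (simp add: dist_norm)
    have nu2: "(norm u)\<^sup>2 \<le> (d + ek)\<^sup>2" using nu by (intro power_mono) auto
    have nv2: "(norm v)\<^sup>2 \<le> (d + em)\<^sup>2" using nv by (intro power_mono) auto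
    have "c k - c m = v - u" unfolding u_def v_def by simp
    then have "(norm (c k - c m))\<^sup>2 = 2 * (norm u)\<^sup>2 + 2 * (norm v)\<^sup>2 - (norm (u + v))\<^sup>2"
      using parallelogram_aux[of v u] by simp
    also have "\<dots> \<le> 2 * (d + ek)\<^sup>2 + 2 * (d + em)\<^sup>2 - (2*d)\<^sup>2" using nu2 nv2 h1' by linarith
    also have "\<dots> = 4*d*ek + 2*ek*ek + 4*d*em + 2*em*em" by (simp add: power2_eq_square algebra_simps)
    also have "\<dots> \<le> 4*d*ek + 2*ek + 4*d*em + 2*em"
      using ek em d0 by (intro add_mono mult_left_mono) (auto simp: mult_le_cancel_left1)
    also have "\<dots> = (4 * d + 2) * (ek + em)" by (simp add: algebra_simps)
    finally show ?thesis unfolding ek_def em_def .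
  qed
  have "Cauchy c"
  proof (rule metric_CauchyI)
    fix e :: real assume e: "e > 0"
    obtain N :: nat where N: "real N > 2 * (4*d+2) / e\<^sup>2" using reals_Archimedean2 by blast
    have Npos: "real N > 0" using N d0 e by (smt (verit) divide_nonneg_pos zero_less_power)
    show "\<exists>M. \<forall>m\<ge>M. \<forall>n\<ge>M. dist (c m) (c n) < e"
    proof (intro exI allI impI)
      fix k m assume km: "k \<ge> N" "m \<ge> N"
      have a1: "1 / real (Suc k) \<le> 1 / real N" using km Npos by (intro divide_left_mono) auto
      have a2: "1 / real (Suc m) \<le> 1 / real N" using km Npos by (intro divide_left_mono) auto
      have "(dist (c k) (c m))\<^sup>2 \<le> (4 * d + 2) * (2 / real N)"
      proof -
        have b: "1 / real (Suc k) + 1 / real (Suc m) \<le> 2 / real N" using a1 a2 by simp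
        have "(4 * d + 2) * (1 / real (Suc k) + 1 / real (Suc m)) \<le> (4 * d + 2) * (2 / real N)"
          using d0 by (intro mult_left_mono[OF b]) simp
        then show ?thesis using key[of k m] unfolding dist_norm by linarith
      qed
      also have "\<dots> < e\<^sup>2"
      proof -
        have "2 * (4*d+2) < e\<^sup>2 * real N" using N e by (simp add: field_simps)
        then show ?thesis using Npos by (simp add: field_simps)
      qed
      finally have "(dist (c k) (c m))\<^sup>2 < e\<^sup>2" .
      then show "dist (c k) (c m) < e" using e by (simp add: power_less_imp_less_base)
    qed
  qed
  then obtain y where y: "c \<longlonglongrightarrow> y" using Cauchy_convergent_iff convergent_def by blast
  have yC: "y \<in> C" using C(2) c(1) y closed_sequentially by blast
  have "(\<lambda>k. dist a (c k)) \<longlonglongrightarrow> dist a y" using y by (intro tendsto_intros)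
  moreover have "(\<lambda>k. dist a (c k)) \<longlonglongrightarrow> d"
  proof (rule real_tendsto_sandwich[where f="\<lambda>k. d" and h="\<lambda>k. d + 1 / real (Suc k)"])
    show "\<forall>\<^sub>F k in sequentially. d \<le> dist a (c k)" using dle c(1) by auto
    show "\<forall>\<^sub>F k in sequentially. dist a (c k) \<le> d + 1 / real (Suc k)" using c(2) by (intro always_eventually allI) (simp add: less_imp_le)
    show "(\<lambda>k. d) \<longlonglongrightarrow> d" by simp
    show "(\<lambda>k. d + 1 / real (Suc k)) \<longlonglongrightarrow> d"
      using tendsto_add[OF tendsto_const[of d] LIMSEQ_inverse_real_of_nat] by (simp add: inverse_eq_divide)
  qed
  ultimately have "dist a y = d" using LIMSEQ_unique by blast
  then show ?thesis using yC dle by auto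
qed

lemma metric_proj_props:
  fixes a :: "'a::{real_inner,complete_space}"
  assumes C: "C \<noteq> {}" "closed C" "convex C"
  shows "metric_proj C a \<in> C" "\<And>p. p \<in> C \<Longrightarrow> inner (a - metric_proj C a) (p - metric_proj C a) \<le> 0"
proof -
  have h: "metric_proj C a \<in> C \<and> (\<forall>z\<in>C. dist a (metric_proj C a) \<le> dist a z)"
    unfolding metric_proj_def by (rule someI_ex) (rule proj_exists[OF C])
  then show "metric_proj C a \<in> C" by simp
  fix p assume "p \<in> C"
  then show "inner (a - metric_proj C a) (p - metric_proj C a) \<le> 0"
    using any_closest_point_dot[OF C(3) C(2)] h by blast
qed

lemma expand_aux:
  fixes y w p D :: "'a::real_inner"
  shows "(norm (y - l *\<^sub>R D - p))\<^sup>2 = (norm (w - p))\<^sup>2 - (norm (w - y))\<^sup>2 + 2 * inner (y - w) (y - p)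
     + l\<^sup>2 * (norm D)\<^sup>2 - 2 * l * inner (y - p) D"
  unfolding power2_norm_eq_inner
  by (simp add: inner_add_left inner_add_right inner_diff_left inner_diff_right inner_commute algebra_simps power2_eq_square)

theorem proposition3p1:
  fixes A :: "'a::{real_inner, complete_space} \<Rightarrow> 'a"
    and C :: "'a set"
    and x w z y :: "nat \<Rightarrow> 'a"
    and lam alpha beta theta mus ps :: "nat \<Rightarrow> real"
    and mu :: real
  assumes C: "C \<noteq> {}" "closed C" "convex C"
    and mu: "0 < mu" "mu < 1"
    and lam1: "lam 1 > 0"
    and mus_nonneg: "\<And>n. mus n \<ge> 0"
    and ps_nonneg: "\<And>n. ps n \<ge> 0"
    and w_def: "\<And>n. n \<ge> 1 \<Longrightarrow> w n = x n + alpha n *\<^sub>R (x n - x (n - 1))"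
    and z_def: "\<And>n. n \<ge> 1 \<Longrightarrow> z n = x n + beta n *\<^sub>R (x n - x (n - 1))"
    and y_def: "\<And>n. n \<ge> 1 \<Longrightarrow> y n = metric_proj C (w n - lam n *\<^sub>R A (w n))"
    and lam_upd: "\<And>n. n \<ge> 1 \<Longrightarrow> lam (Suc n) =
        (if A (w n) \<noteq> A (y n)
         then min ((mus n + mu) * norm (w n - y n) / norm (A (w n) - A (y n))) (lam n + ps n)
         else lam n + ps n)"
    and nostop: "\<And>n. n \<ge> 1 \<Longrightarrow> w n \<noteq> y n"
    and x_upd: "\<And>n. n \<ge> 1 \<Longrightarrow> x (Suc n) =
        (1 - theta n) *\<^sub>R z n + theta n *\<^sub>R (y n - lam n *\<^sub>R (A (y n) - A (w n)))"
    and S_ne: "VI_sol A C \<noteq> {}"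
    and pm: "pseudomonotone A"
    and lip: "\<exists>L. L-lipschitz_on UNIV A"
    and wlsc: "\<And>xs u. weakly_converges xs u \<Longrightarrow> norm (A u) \<le> liminf (\<lambda>n. ereal (norm (A (xs n))))"
  shows "(\<forall>p\<in>VI_sol A C. \<forall>n\<ge>1.
            (norm (y n - lam n *\<^sub>R (A (y n) - A (w n)) - p))\<^sup>2
              \<le> (norm (w n - p))\<^sup>2
                 - (1 - (mu + mus n)\<^sup>2 * (lam n)\<^sup>2 / (lam (Suc n))\<^sup>2) * (norm (w n - y n))\<^sup>2)
       \<and> (\<forall>r>0. strongly_pseudomonotone r A \<longrightarrow>
            (\<forall>p\<in>VI_sol A C. \<forall>n\<ge>1.
              (norm (y n - lam n *\<^sub>R (A (y n) - A (w n)) - p))\<^sup>2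
                \<le> (norm (w n - p))\<^sup>2
                   - (1 - (mu + mus n)\<^sup>2 * (lam n)\<^sup>2 / (lam (Suc n))\<^sup>2) * (norm (w n - y n))\<^sup>2
                   - 2 * r * lam n * (norm (y n - p))\<^sup>2))"
proof -
  have lampos: "lam n > 0" if "n \<ge> 1" for n
    using that
  proof (induction n rule: dec_induct)
    case base then show ?case using lam1 by simp
  next
    case (step n)
    have wy: "norm (w n - y n) > 0" using nostop[of n] step(1) by simp
    have m: "mus n + mu > 0" using mus_nonneg[of n] mu by linarith
    have lp: "lam n + ps n > 0" using step ps_nonneg[of n] by linarith
    show ?case
    proof (cases "A (w n) \<noteq> A (y n)")
      case True
      then have "norm (A (w n) - A (y n)) > 0" by simp
      then have "(mus n + mu) * norm (w n - y n) / norm (A (w n) - A (y n)) > 0" using wy m by simp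
      then show ?thesis using lam_upd[of n] step(1) True lp by simp
    next
      case False then show ?thesis using lam_upd[of n] step(1) lp by simp
    qed
  qed
  have core: "(norm (y n - lam n *\<^sub>R (A (y n) - A (w n)) - p))\<^sup>2
          \<le> (norm (w n - p))\<^sup>2
             - (1 - (mu + mus n)\<^sup>2 * (lam n)\<^sup>2 / (lam (Suc n))\<^sup>2) * (norm (w n - y n))\<^sup>2
             - 2 * lam n * inner (A (y n)) (y n - p)"
    if p: "p \<in> VI_sol A C" and n: "n \<ge> 1" for p n
  proof -
    define K where "K = (mu + mus n)\<^sup>2 * (lam n)\<^sup>2 / (lam (Suc n))\<^sup>2"
    define D where "D = A (y n) - A (w n)"
    have pC: "p \<in> C" using p unfolding VI_sol_def by simp
    have l: "lam n > 0" using lampos n by simp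
    have l': "lam (Suc n) > 0" using lampos n by simp
    have P: "inner (y n - w n) (y n - p) \<le> - lam n * inner (A (w n)) (y n - p)"
    proof -
      have "inner ((w n - lam n *\<^sub>R A (w n)) - y n) (p - y n) \<le> 0"
        using metric_proj_props(2)[OF C pC, of "w n - lam n *\<^sub>R A (w n)"] y_def[OF n] by simp
      then show ?thesis
        by (simp add: inner_diff_left inner_diff_right inner_commute algebra_simps)
    qed
    have Q: "(lam n)\<^sup>2 * (norm D)\<^sup>2 \<le> K * (norm (w n - y n))\<^sup>2"
    proof (cases "A (w n) \<noteq> A (y n)")
      case False
      then have "D = 0" unfolding D_def by simp
      then show ?thesis unfolding K_def by simp
    next
      case True
      have "lam (Suc n) \<le> (mus n + mu) * norm (w n - y n) / norm (A (w n) - A (y n))"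
        using lam_upd[OF n] True by simp
      moreover have nz: "norm (A (w n) - A (y n)) > 0" using True by simp
      ultimately have "lam (Suc n) * norm D \<le> (mus n + mu) * norm (w n - y n)"
        unfolding D_def by (simp add: field_simps norm_minus_commute)
      then have "norm D \<le> (mu + mus n) * norm (w n - y n) / lam (Suc n)"
        using l' by (simp add: field_simps)
      then have "(norm D)\<^sup>2 \<le> ((mu + mus n) * norm (w n - y n) / lam (Suc n))\<^sup>2"
        by (intro power_mono) auto
      then have "(lam n)\<^sup>2 * (norm D)\<^sup>2 \<le> (lam n)\<^sup>2 * ((mu + mus n) * norm (w n - y n) / lam (Suc n))\<^sup>2"
        by (intro mult_left_mono) auto
      also have "\<dots> = K * (norm (w n - y n))\<^sup>2" unfolding K_def by (simp add: power_divide power_mult_distrib)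
      finally show ?thesis .
    qed
    have E: "(norm (y n - lam n *\<^sub>R D - p))\<^sup>2 = (norm (w n - p))\<^sup>2 - (norm (w n - y n))\<^sup>2
        + 2 * inner (y n - w n) (y n - p) + (lam n)\<^sup>2 * (norm D)\<^sup>2 - 2 * lam n * inner (y n - p) D"
      by (rule expand_aux)
    have F: "inner (y n - p) D = inner (A (y n)) (y n - p) - inner (A (w n)) (y n - p)"
      unfolding D_def by (simp add: inner_diff_right inner_commute)
    have F2: "lam n * inner (y n - p) D = lam n * inner (A (y n)) (y n - p) - lam n * inner (A (w n)) (y n - p)"
      using F by (simp add: right_diff_distrib)
    have G: "(1 - K) * (norm (w n - y n))\<^sup>2 = (norm (w n - y n))\<^sup>2 - K * (norm (w n - y n))\<^sup>2"
      by (simp add: left_diff_distrib)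
    have "(norm (y n - lam n *\<^sub>R (A (y n) - A (w n)) - p))\<^sup>2
          \<le> (norm (w n - p))\<^sup>2 - (1 - K) * (norm (w n - y n))\<^sup>2
             - 2 * lam n * inner (A (y n)) (y n - p)"
      unfolding D_def[symmetric] G using E F2 P Q by linarith
    then show ?thesis unfolding K_def .
  qed
  show ?thesis
  proof (intro conjI allI impI ballI)
    fix p and n :: nat assume p: "p \<in> VI_sol A C" and n: "n \<ge> 1"
    have yC: "y n \<in> C" using metric_proj_props(1)[OF C] y_def[OF n] by simp
    have "inner (A p) (y n - p) \<ge> 0" using p yC unfolding VI_sol_def by auto
    then have R: "inner (A (y n)) (y n - p) \<ge> 0" by (rule pm[unfolded pseudomonotone_def, rule_format])
    have "0 \<le> 2 * lam n * inner (A (y n)) (y n - p)" using R lampos[OF n] by simp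
    then show "(norm (y n - lam n *\<^sub>R (A (y n) - A (w n)) - p))\<^sup>2
              \<le> (norm (w n - p))\<^sup>2
                 - (1 - (mu + mus n)\<^sup>2 * (lam n)\<^sup>2 / (lam (Suc n))\<^sup>2) * (norm (w n - y n))\<^sup>2"
      using core[OF p n] by linarith
  next
    fix r :: real and p and n :: nat assume r: "r > 0" and sp: "strongly_pseudomonotone r A"
      and p: "p \<in> VI_sol A C" and n: "n \<ge> 1"
    have "inner (A (y n)) (y n - p) \<ge> r * (norm (y n - p))\<^sup>2"
    proof -
      have yC: "y n \<in> C" using metric_proj_props(1)[OF C] y_def[OF n] by simp
      have "inner (A p) (y n - p) \<ge> 0" using p yC unfolding VI_sol_def by auto
      then show ?thesis by (rule sp[unfolded strongly_pseudomonotone_def, rule_format])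
    qed
    then have "2 * lam n * (r * (norm (y n - p))\<^sup>2) \<le> 2 * lam n * inner (A (y n)) (y n - p)"
      using lampos[OF n] by (intro mult_left_mono) auto
    then show "(norm (y n - lam n *\<^sub>R (A (y n) - A (w n)) - p))\<^sup>2
                \<le> (norm (w n - p))\<^sup>2
                   - (1 - (mu + mus n)\<^sup>2 * (lam n)\<^sup>2 / (lam (Suc n))\<^sup>2) * (norm (w n - y n))\<^sup>2
                   - 2 * r * lam n * (norm (y n - p))\<^sup>2"
    proof -
      have "2 * r * lam n * (norm (y n - p))\<^sup>2 = 2 * lam n * (r * (norm (y n - p))\<^sup>2)" by simp
      then show ?thesis using core[OF p n] \<open>2 * lam n * (r * (norm (y n - p))\<^sup>2) \<le> 2 * lam n * inner (A (y n)) (y n - p)\<close>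
        by linarith
    qed
  qed
qed

end
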